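(* Let $(H,\alpha_H)$ be a Hom-bialgebra, let $m\in\mathbb Z$, and for Hom-Long dimodules $(U,\alpha_U),(V,\alpha_V)$ define $\xi_{U,V}:U\otimes V\to U\otimes V$, $u\otimes v\mapsto\alpha_U^{-1}(u)\cdot\alpha_H^m(v_{(1)})\otimes\alpha_V^{-1}(v_{(0)})$. Then for all Hom-Long dimodules $U,V,W$, $$(\xi_{U,V}\otimes\mathrm{id}_W)\circ a^{-1}_{U,V,W}\circ(\mathrm{id}_U\otimes\xi_{V,W})\circ a_{U,V,W}=a^{-1}_{U,V,W}\circ(\mathrm{id}_U\otimes\xi_{V,W})\circ a_{U,V,W}\circ(\xi_{U,V}\otimes\mathrm{id}_W)$$ as maps $(U\otimes V)\otimes W\to(U\otimes V)\otimes W$.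
   Context: $\Bbbk$ field of characteristic $0$; vector spaces finite-dimensional; structure maps $\alpha$ bijective; $i,j$ fixed integers; $a_{X,Y,Z}((x\otimes y)\otimes z)=\alpha_X^{i+1}(x)\otimes(y\otimes\alpha_Z^{-j-1}(z))$ is the associativity constraint of $\overline{\mathcal H}^{i,j}(Vec_\Bbbk)$ (objects $(X,\alpha_X)$, $\alpha_X$ a linear automorphism). Hom-bialgebra: Hom-algebra ($\alpha(a)(bc)=(ab)\alpha(c)$, $\alpha(1)=1$, $1a=a1=\alpha(a)$), Hom-coalgebra ($\varepsilon\alpha=\varepsilon$, $\alpha(c_1)\otimes\Delta(c_2)=\Delta(c_1)\otimes\alpha(c_2)$, $\varepsilon(c_1)c_2=c_1\varepsilon(c_2)=\alpha(c)$), $\Delta,\varepsilon$ unit-preserving Hom-algebra maps. A Hom-Long dimodule is $(U,\alpha_U)$, a right $H$-Hom-module ($(u\cdot a)\cdot\alpha_H(b)=\alpha_U(u)\cdot(ab)$, $u\cdot1_H=\alpha_U(u)$) and right $H$-Hom-comodule ($\rho(u)=u_{(0)}\otimes u_{(1)}$, $\alpha_U(u_{(0)})\otimes\Delta(u_{(1)})=\rho(u_{(0)})\otimes\alpha_H(u_{(1)})$, $\varepsilon(u_{(1)})u_{(0)}=\alpha_U(u)$), structure maps commuting with the $\alpha$'s, with $\rho(u\cdot h)=u_{(0)}\cdot\alpha_H(h)\otimes\alpha_H(u_{(1)})$. *)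

theory Defs
  imports Main "HOL-Library.Function_Algebras"
begin

text \<open>Finite-dimensional spaces over a field 'k are modelled concretely as
  coordinate spaces 'i \<Rightarrow> 'k with 'i a finite index type (every finite-dimensional
  space is of this form).  The tensor product of 'i \<Rightarrow> 'k and 'j \<Rightarrow> 'k is
  ('i \<times> 'j) \<Rightarrow> 'k.\<close>

definition sc :: "'k::field \<Rightarrow> ('i \<Rightarrow> 'k) \<Rightarrow> ('i \<Rightarrow> 'k)" where
  "sc c x = (\<lambda>i. c * x i)"

definition bvec :: "'i \<Rightarrow> ('i \<Rightarrow> 'k::field)" where
  "bvec i = (\<lambda>j. if j = i then 1 else 0)"

definition tensor :: "('i \<Rightarrow> 'k::field) \<Rightarrow> ('j \<Rightarrow> 'k) \<Rightarrow> ('i \<times> 'j \<Rightarrow> 'k)" where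
  "tensor x y = (\<lambda>(i, j). x i * y j)"

text \<open>Linear extension to U \<otimes> V of a bilinear map U \<times> V \<rightarrow> X
  (universal property of the tensor product).\<close>
definition tapp :: "(('i::finite \<Rightarrow> 'k::field) \<Rightarrow> ('j::finite \<Rightarrow> 'k) \<Rightarrow> ('x \<Rightarrow> 'k))
    \<Rightarrow> ('i \<times> 'j \<Rightarrow> 'k) \<Rightarrow> ('x \<Rightarrow> 'k)" where
  "tapp \<beta> t = (\<Sum>i\<in>UNIV. \<Sum>j\<in>UNIV. sc (t (i, j)) (\<beta> (bvec i) (bvec j)))"

definition tmap :: "(('i::finite \<Rightarrow> 'k::field) \<Rightarrow> ('i2 \<Rightarrow> 'k)) \<Rightarrow> (('j::finite \<Rightarrow> 'k) \<Rightarrow> ('j2 \<Rightarrow> 'k))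
    \<Rightarrow> ('i \<times> 'j \<Rightarrow> 'k) \<Rightarrow> ('i2 \<times> 'j2 \<Rightarrow> 'k)" where
  "tmap f g = tapp (\<lambda>x y. tensor (f x) (g y))"

definition assoc0 :: "(('a \<times> 'b) \<times> 'c \<Rightarrow> 'k) \<Rightarrow> ('a \<times> ('b \<times> 'c) \<Rightarrow> 'k)" where
  "assoc0 t = (\<lambda>(a, (b, c)). t ((a, b), c))"

definition lin :: "(('i \<Rightarrow> 'k::field) \<Rightarrow> ('j \<Rightarrow> 'k)) \<Rightarrow> bool" where
  "lin f \<longleftrightarrow> (\<forall>x y. f (x + y) = f x + f y) \<and> (\<forall>c x. f (sc c x) = sc c (f x))"

definition linf :: "(('i \<Rightarrow> 'k::field) \<Rightarrow> 'k) \<Rightarrow> bool" where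
  "linf f \<longleftrightarrow> (\<forall>x y. f (x + y) = f x + f y) \<and> (\<forall>c x. f (sc c x) = c * f x)"

definition bilin :: "(('i \<Rightarrow> 'k::field) \<Rightarrow> ('j \<Rightarrow> 'k) \<Rightarrow> ('l \<Rightarrow> 'k)) \<Rightarrow> bool" where
  "bilin b \<longleftrightarrow> (\<forall>x. lin (b x)) \<and> (\<forall>y. lin (\<lambda>x. b x y))"

definition zpow :: "('a \<Rightarrow> 'a) \<Rightarrow> int \<Rightarrow> ('a \<Rightarrow> 'a)" where
  "zpow f n = (if 0 \<le> n then f ^^ nat n else inv f ^^ nat (- n))"

definition hom_bialgebra ::
  "(('h::finite \<Rightarrow> 'k::field) \<Rightarrow> ('h \<Rightarrow> 'k) \<Rightarrow> ('h \<Rightarrow> 'k)) \<Rightarrow> ('h \<Rightarrow> 'k)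
   \<Rightarrow> (('h \<Rightarrow> 'k) \<Rightarrow> ('h \<times> 'h \<Rightarrow> 'k)) \<Rightarrow> (('h \<Rightarrow> 'k) \<Rightarrow> 'k) \<Rightarrow> (('h \<Rightarrow> 'k) \<Rightarrow> ('h \<Rightarrow> 'k)) \<Rightarrow> bool"
where
  "hom_bialgebra mult one Delta eps \<alpha> \<longleftrightarrow>
     lin \<alpha> \<and> bij \<alpha> \<and>
     \<comment> \<open>Hom-algebra\<close>
     bilin mult \<and>
     (\<forall>a b. \<alpha> (mult a b) = mult (\<alpha> a) (\<alpha> b)) \<and> \<alpha> one = one \<and>
     (\<forall>a b c. mult (\<alpha> a) (mult b c) = mult (mult a b) (\<alpha> c)) \<and>
     (\<forall>a. mult one a = \<alpha> a \<and> mult a one = \<alpha> a) \<and>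
     \<comment> \<open>Hom-coalgebra\<close>
     lin Delta \<and> linf eps \<and>
     (\<forall>c. Delta (\<alpha> c) = tmap \<alpha> \<alpha> (Delta c)) \<and>
     (\<forall>c. eps (\<alpha> c) = eps c) \<and>
     (\<forall>c. tmap \<alpha> Delta (Delta c) = assoc0 (tmap Delta \<alpha> (Delta c))) \<and>
     (\<forall>c. tapp (\<lambda>x y. sc (eps x) y) (Delta c) = \<alpha> c) \<and>
     (\<forall>c. tapp (\<lambda>x y. sc (eps y) x) (Delta c) = \<alpha> c) \<and>
     \<comment> \<open>Delta and eps are unit-preserving Hom-algebra maps\<close>
     (\<forall>a b. Delta (mult a b) =
        tapp (\<lambda>x y. tapp (\<lambda>x' y'. tensor (mult x x') (mult y y')) (Delta b)) (Delta a)) \<and>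
     Delta one = tensor one one \<and>
     (\<forall>a b. eps (mult a b) = eps a * eps b) \<and> eps one = 1"

definition hom_long_dimodule ::
  "(('h::finite \<Rightarrow> 'k::field) \<Rightarrow> ('h \<Rightarrow> 'k) \<Rightarrow> ('h \<Rightarrow> 'k)) \<Rightarrow> ('h \<Rightarrow> 'k)
   \<Rightarrow> (('h \<Rightarrow> 'k) \<Rightarrow> ('h \<times> 'h \<Rightarrow> 'k)) \<Rightarrow> (('h \<Rightarrow> 'k) \<Rightarrow> 'k) \<Rightarrow> (('h \<Rightarrow> 'k) \<Rightarrow> ('h \<Rightarrow> 'k))
   \<Rightarrow> (('u::finite \<Rightarrow> 'k) \<Rightarrow> ('u \<Rightarrow> 'k))
   \<Rightarrow> (('u \<Rightarrow> 'k) \<Rightarrow> ('h \<Rightarrow> 'k) \<Rightarrow> ('u \<Rightarrow> 'k))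
   \<Rightarrow> (('u \<Rightarrow> 'k) \<Rightarrow> ('u \<times> 'h \<Rightarrow> 'k)) \<Rightarrow> bool"
where
  "hom_long_dimodule mult one Delta eps \<alpha>H \<alpha>U act rho \<longleftrightarrow>
     lin \<alpha>U \<and> bij \<alpha>U \<and>
     \<comment> \<open>right Hom-module\<close>
     bilin act \<and>
     (\<forall>u a b. act (act u a) (\<alpha>H b) = act (\<alpha>U u) (mult a b)) \<and>
     (\<forall>u. act u one = \<alpha>U u) \<and>
     (\<forall>u a. \<alpha>U (act u a) = act (\<alpha>U u) (\<alpha>H a)) \<and>
     \<comment> \<open>right Hom-comodule\<close>
     lin rho \<and>
     (\<forall>u. rho (\<alpha>U u) = tmap \<alpha>U \<alpha>H (rho u)) \<and>
     (\<forall>u. tmap \<alpha>U Delta (rho u) = assoc0 (tmap rho \<alpha>H (rho u))) \<and>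
     (\<forall>u. tapp (\<lambda>x h. sc (eps h) x) (rho u) = \<alpha>U u) \<and>
     \<comment> \<open>Long compatibility\<close>
     (\<forall>u h. rho (act u h) = tmap (\<lambda>x. act x (\<alpha>H h)) \<alpha>H (rho u))"

definition xi ::
  "(('h::finite \<Rightarrow> 'k::field) \<Rightarrow> ('h \<Rightarrow> 'k)) \<Rightarrow> int
   \<Rightarrow> (('u::finite \<Rightarrow> 'k) \<Rightarrow> ('u \<Rightarrow> 'k)) \<Rightarrow> (('u \<Rightarrow> 'k) \<Rightarrow> ('h \<Rightarrow> 'k) \<Rightarrow> ('u \<Rightarrow> 'k))
   \<Rightarrow> (('v::finite \<Rightarrow> 'k) \<Rightarrow> ('v \<Rightarrow> 'k)) \<Rightarrow> (('v \<Rightarrow> 'k) \<Rightarrow> ('v \<times> 'h \<Rightarrow> 'k))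
   \<Rightarrow> ('u \<times> 'v \<Rightarrow> 'k) \<Rightarrow> ('u \<times> 'v \<Rightarrow> 'k)"
where
  "xi \<alpha>H m \<alpha>U actU \<alpha>V rhoV =
     tapp (\<lambda>u v. tapp (\<lambda>v0 v1. tensor (actU (inv \<alpha>U u) (zpow \<alpha>H m v1)) (inv \<alpha>V v0)) (rhoV v))"

text \<open>Associativity constraint of H-bar^{i,j}(Vec_k):
  a((x \<otimes> y) \<otimes> z) = \<alpha>X^{i+1}(x) \<otimes> (y \<otimes> \<alpha>Z^{-j-1}(z)), and its inverse.\<close>
definition assocH ::
  "int \<Rightarrow> int \<Rightarrow> (('a::finite \<Rightarrow> 'k::field) \<Rightarrow> ('a \<Rightarrow> 'k)) \<Rightarrow> (('c::finite \<Rightarrow> 'k) \<Rightarrow> ('c \<Rightarrow> 'k))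
   \<Rightarrow> (('a \<times> 'b::finite) \<times> 'c \<Rightarrow> 'k) \<Rightarrow> ('a \<times> ('b \<times> 'c) \<Rightarrow> 'k)"
where
  "assocH i j \<alpha>X \<alpha>Z =
     tapp (\<lambda>xy z. tapp (\<lambda>x y. tensor (zpow \<alpha>X (i + 1) x) (tensor y (zpow \<alpha>Z (- j - 1) z))) xy)"

definition assocH_inv ::
  "int \<Rightarrow> int \<Rightarrow> (('a::finite \<Rightarrow> 'k::field) \<Rightarrow> ('a \<Rightarrow> 'k)) \<Rightarrow> (('c::finite \<Rightarrow> 'k) \<Rightarrow> ('c \<Rightarrow> 'k))
   \<Rightarrow> ('a \<times> ('b::finite \<times> 'c) \<Rightarrow> 'k) \<Rightarrow> (('a \<times> 'b) \<times> 'c \<Rightarrow> 'k)"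
where
  "assocH_inv i j \<alpha>X \<alpha>Z =
     tapp (\<lambda>x yz. tapp (\<lambda>y z. tensor (tensor (zpow \<alpha>X (- i - 1) x) y) (zpow \<alpha>Z (j + 1) z)) yz)"

end

theory Submission
  imports Defs
begin


lemma sum_fapply: "finite A \<Longrightarrow> (sum g A) x = (\<Sum>a\<in>A. g a x)"
  by (induction A rule: finite_induct) auto

lemma sc0: "sc 0 y = 0" by (auto simp: sc_def fun_eq_iff)

lemma lin_zero: "lin f \<Longrightarrow> f 0 = 0"
  by (metis lin_def sc0)

lemma lin_sc: "lin f \<Longrightarrow> f (sc c x) = sc c (f x)" by (simp add: lin_def)
lemma lin_add: "lin f \<Longrightarrow> f (x + y) = f x + f y" by (simp add: lin_def)
lemma lin_sum: assumes "lin f" "finite A" shows "f (sum g A) = (\<Sum>a\<in>A. f (g a))"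
  using assms(2)
proof (induction A rule: finite_induct)
  case empty show ?case by (simp only: sum.empty lin_zero[OF assms(1)])
next
  case (insert x F) then show ?case by (simp only: sum.insert[OF insert(1,2)] lin_add[OF assms(1)] insert(3))
qed


lemma tapp_apply: "tapp \<beta> t x = (\<Sum>i\<in>UNIV. \<Sum>j\<in>UNIV. t (i,j) * \<beta> (bvec i) (bvec j) x)"
  by (simp add: tapp_def sum_fapply sc_def)

lemma lin_tapp: "lin (tapp \<beta>)"
  unfolding lin_def
  by (auto simp: fun_eq_iff tapp_apply sc_def distrib_right sum.distrib sum_distrib_left mult.assoc)

lemma lin_tapp_fun: "(\<And>a b. lin (\<lambda>u. \<gamma> u a b)) \<Longrightarrow> lin (\<lambda>u. tapp (\<gamma> u) t)"
  unfolding lin_def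
  by (auto simp: fun_eq_iff tapp_apply sc_def distrib_left sum.distrib sum_distrib_left mult.left_commute)

lemma tapp_push: "lin L \<Longrightarrow> L (tapp \<beta> t) = tapp (\<lambda>x y. L (\<beta> x y)) t"
  unfolding tapp_def by (simp add: lin_sum lin_sc)

lemma decomp: "x = (\<Sum>i\<in>(UNIV::'i::finite set). sc (x i) (bvec i))"
proof -
  have "\<And>xa. (\<Sum>a\<in>UNIV. x a * (if xa = a then 1 else 0)) = x xa"
  proof -
    fix xa
    have "\<And>a. x a * (if xa = a then 1 else 0) = (if a = xa then x a else 0)" by auto
    then show "(\<Sum>a\<in>UNIV. x a * (if xa = a then 1 else 0)) = x xa" by simp
  qed
  then show ?thesis by (auto simp: fun_eq_iff sum_fapply sc_def bvec_def)
qed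

lemma lin_id: "lin id" "lin (\<lambda>x. x)" by (auto simp: lin_def)
lemma lin_comp: "lin f \<Longrightarrow> lin g \<Longrightarrow> lin (\<lambda>x. f (g x))" by (simp add: lin_def)
lemma lin_comp': "lin f \<Longrightarrow> lin g \<Longrightarrow> lin (f \<circ> g)" by (simp add: lin_def)
lemma lin_tensor1: "lin (\<lambda>x. tensor x c)"
  by (auto simp: lin_def tensor_def sc_def fun_eq_iff distrib_right mult.assoc)
lemma lin_tensor2: "lin (tensor c)"
  by (auto simp: lin_def tensor_def sc_def fun_eq_iff distrib_left mult.left_commute)

lemma tapp_tensor:
  assumes "bilin \<beta>"
  shows "tapp \<beta> (tensor x y) = \<beta> x y"
proof -
  have l1: "\<And>y. lin (\<lambda>x. \<beta> x y)" and l2: "\<And>x. lin (\<beta> x)" using assms by (auto simp: bilin_def)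
  have "\<beta> x y = \<beta> (\<Sum>i\<in>UNIV. sc (x i) (bvec i)) (\<Sum>j\<in>UNIV. sc (y j) (bvec j))"
    using decomp[of x] decomp[of y] by simp
  also have "\<dots> = (\<Sum>j\<in>UNIV. sc (y j) (\<Sum>i\<in>UNIV. sc (x i) (\<beta> (bvec i) (bvec j))))"
    by (simp only: lin_sum[OF l1] lin_sum[OF l2] lin_sc[OF l1] lin_sc[OF l2] finite)
  moreover have "\<And>z. (\<Sum>i\<in>UNIV. \<Sum>j\<in>UNIV. (x i * y j) * \<beta> (bvec i) (bvec j) z) = (\<Sum>j\<in>UNIV. y j * (\<Sum>i\<in>UNIV. x i * \<beta> (bvec i) (bvec j) z))"
    by (simp add: sum_distrib_left mult_ac, rule sum.swap)
  ultimately show ?thesis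
    by (simp add: fun_eq_iff tapp_apply sum_fapply sc_def tensor_def)
qed

lemma tapp_tensor_id: "tapp tensor (t::'i::finite\<times>'j::finite \<Rightarrow> 'k::field) = t"
proof -
  have e: "\<And>a b i j. t (i, j) * tensor (bvec i) (bvec j) (a,b) = (if j = b then (if i = a then t(a,b) else 0) else 0)"
    by (auto simp: tensor_def bvec_def)
  have "\<And>a b. (\<Sum>i\<in>UNIV. \<Sum>j\<in>UNIV. t (i, j) * tensor (bvec i) (bvec j) (a,b)) = t (a,b)"
    by (simp only: e) simp
  then show ?thesis by (auto simp: fun_eq_iff tapp_apply)
qed

lemma lin_ext:
  fixes F :: "('i::finite \<times> 'j::finite \<Rightarrow> 'k::field) \<Rightarrow> _"
  assumes "lin F" "lin G" "\<And>x y. F (tensor x y) = G (tensor x y)"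
  shows "F = G"
proof
  fix t
  have "F t = F (tapp tensor t)" by (simp add: tapp_tensor_id)
  also have "\<dots> = tapp (\<lambda>x y. F (tensor x y)) t" by (rule tapp_push[OF assms(1)])
  also have "\<dots> = tapp (\<lambda>x y. G (tensor x y)) t" by (simp add: assms(3))
  also have "\<dots> = G (tapp tensor t)" by (rule tapp_push[OF assms(2), symmetric])
  finally show "F t = G t" by (simp add: tapp_tensor_id)
qed

lemma sum4: "(\<Sum>i\<in>A. \<Sum>j\<in>B. \<Sum>k\<in>C. \<Sum>l\<in>D. f i j k l) = (\<Sum>k\<in>C. \<Sum>l\<in>D. \<Sum>i\<in>A. \<Sum>j\<in>B. (f i j k l::'a::comm_monoid_add))"
proof -
  have "(\<Sum>i\<in>A. \<Sum>j\<in>B. \<Sum>k\<in>C. \<Sum>l\<in>D. f i j k l) = (\<Sum>i\<in>A. \<Sum>k\<in>C. \<Sum>l\<in>D. \<Sum>j\<in>B. f i j k l)"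
    by (rule sum.cong[OF refl], subst sum.swap, rule sum.cong[OF refl], rule sum.swap)
  also have "\<dots> = (\<Sum>k\<in>C. \<Sum>l\<in>D. \<Sum>i\<in>A. \<Sum>j\<in>B. f i j k l)"
    by (subst sum.swap, rule sum.cong[OF refl], rule sum.swap)
  finally show ?thesis .
qed

lemma tapp_swap:
  "tapp (\<lambda>a b. tapp (\<lambda>c d. G a b c d) s) t = tapp (\<lambda>c d. tapp (\<lambda>a b. G a b c d) t) s"
proof -
  have "\<And>x. (\<Sum>i\<in>UNIV. \<Sum>j\<in>UNIV. t (i, j) * (\<Sum>k\<in>UNIV. \<Sum>l\<in>UNIV. s (k, l) * G (bvec i) (bvec j) (bvec k) (bvec l) x))
     = (\<Sum>k\<in>UNIV. \<Sum>l\<in>UNIV. s (k, l) * (\<Sum>i\<in>UNIV. \<Sum>j\<in>UNIV. t (i, j) * G (bvec i) (bvec j) (bvec k) (bvec l) x))"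
    by (simp only: sum_distrib_left mult.left_commute, rule sum4)
  then show ?thesis by (simp add: fun_eq_iff tapp_apply)
qed



lemma bilinI: "(\<And>x. lin (\<beta> x)) \<Longrightarrow> (\<And>y. lin (\<lambda>x. \<beta> x y)) \<Longrightarrow> bilin \<beta>"
  by (simp add: bilin_def)

lemma lin_inv: assumes "lin f" "bij f" shows "lin (inv f)"
proof -
  have fi: "\<And>z. f (inv f z) = z" using assms(2) by (simp add: bij_is_surj surj_f_inv_f)
  have inj: "inj f" using assms(2) by (simp add: bij_is_inj)
  show ?thesis unfolding lin_def
  proof (intro conjI allI)
    fix x y
    have "f (inv f (x + y)) = f (inv f x + inv f y)" by (simp add: fi lin_add[OF assms(1)])
    then show "inv f (x + y) = inv f x + inv f y" using inj by (simp add: inj_eq)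
  next
    fix c x
    have "f (inv f (sc c x)) = f (sc c (inv f x))" by (simp add: fi lin_sc[OF assms(1)])
    then show "inv f (sc c x) = sc c (inv f x)" using inj by (simp add: inj_eq)
  qed
qed

lemma lin_funpow: "lin (f::('i\<Rightarrow>'k::field)\<Rightarrow>('i\<Rightarrow>'k)) \<Longrightarrow> lin (f ^^ n)"
  by (induction n) (auto simp: lin_id lin_comp')

lemma lin_zpow: "lin f \<Longrightarrow> bij f \<Longrightarrow> lin (zpow f n)"
  by (simp add: zpow_def lin_funpow lin_inv)

lemma funpow_inv_cancel: "bij (f::'a\<Rightarrow>'a) \<Longrightarrow> (inv f ^^ n) ((f ^^ n) x) = x"
proof (induction n arbitrary: x)
  case 0 then show ?case by simp
next
  case (Suc n)
  have e: "(inv f ^^ Suc n) = (inv f ^^ n) \<circ> inv f" by (rule funpow_Suc_right)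
  have e2: "(f ^^ Suc n) x = f ((f ^^ n) x)" by simp
  have "(inv f ^^ Suc n) ((f ^^ Suc n) x) = (inv f ^^ n) (inv f (f ((f ^^ n) x)))"
    by (simp only: e comp_apply e2)
  also have "\<dots> = x" using Suc by (simp add: bij_is_inj)
  finally show ?case .
qed

lemma funpow_inv_cancel2: "bij (f::'a\<Rightarrow>'a) \<Longrightarrow> (f ^^ n) ((inv f ^^ n) x) = x"
proof (induction n arbitrary: x)
  case 0 then show ?case by simp
next
  case (Suc n)
  have e: "(f ^^ Suc n) = (f ^^ n) \<circ> f" by (rule funpow_Suc_right)
  have e2: "(inv f ^^ Suc n) x = inv f ((inv f ^^ n) x)" by simp
  have "(f ^^ Suc n) ((inv f ^^ Suc n) x) = (f ^^ n) (f (inv f ((inv f ^^ n) x)))"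
    by (simp only: e comp_apply e2)
  also have "\<dots> = x" using Suc by (simp add: bij_is_surj surj_f_inv_f)
  finally show ?case .
qed

lemma zpow_cancel: "bij f \<Longrightarrow> zpow f (- i - 1) (zpow f (i + 1) x) = x"
proof (cases "0 \<le> i + 1")
  case True
  assume b: "bij f"
  show ?thesis
  proof (cases "i + 1 = 0")
    case True then have "- i - 1 = 0" by simp
    then show ?thesis using True by (simp add: zpow_def)
  next
    case False
    then have "\<not> 0 \<le> - i - 1" "nat (- (- i - 1)) = nat (i + 1)" using \<open>0 \<le> i + 1\<close> by auto
    then show ?thesis using \<open>0 \<le> i + 1\<close> by (simp add: zpow_def funpow_inv_cancel[OF b])
  qed
next
  case False
  assume b: "bij f"
  then have "0 \<le> - i - 1" "nat (- (i + 1)) = nat (- i - 1)" using False by auto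
  then show ?thesis using False by (simp add: zpow_def funpow_inv_cancel2[OF b])
qed

lemma tmap_tt: "lin f \<Longrightarrow> lin g \<Longrightarrow> tmap f g (tensor x y) = tensor (f x) (g y)"
  unfolding tmap_def
  by (rule tapp_tensor, rule bilinI, rule lin_comp[OF lin_tensor2], simp,
      rule lin_comp[OF lin_tensor1, where g=f], simp)

lemma tapp_tmap:
  assumes "bilin \<beta>" "lin f" "lin g"
  shows "tapp \<beta> (tmap f g t) = tapp (\<lambda>x y. \<beta> (f x) (g y)) t"
  unfolding tmap_def
  by (simp add: tapp_push[OF lin_tapp] tapp_tensor[OF assms(1)])

lemma lin_tmap: "lin (tmap f g)" by (simp add: tmap_def lin_tapp)

lemma tmap_tmap:
  assumes "lin f" "lin g" "lin f'" "lin g'"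
  shows "tmap f g (tmap f' g' t) = tmap (\<lambda>x. f (f' x)) (\<lambda>y. g (g' y)) t"
proof -
  have "tmap f g (tmap f' g' t) = tapp (\<lambda>x y. tmap f g (tensor (f' x) (g' y))) t"
    unfolding tmap_def[of f'] by (rule tapp_push[OF lin_tmap])
  also have "\<dots> = tmap (\<lambda>x. f (f' x)) (\<lambda>y. g (g' y)) t"
    by (simp only: tmap_tt[OF assms(1,2)], simp only: tmap_def)
  finally show ?thesis .
qed

lemma tmap_id_id: "tmap (\<lambda>x. x) (\<lambda>y. y) t = t"
  by (simp add: tmap_def tapp_tensor_id[unfolded tmap_def] tapp_tensor_id)

lemma lin_assocH: "lin (assocH i j a c)" by (simp add: assocH_def lin_tapp)
lemma lin_assocH_inv: "lin (assocH_inv i j a c)" by (simp add: assocH_inv_def lin_tapp)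
lemma lin_xi: "lin (xi aH m aU actU aV rhoV)" by (simp add: xi_def lin_tapp)

lemma assocH_tt:
  assumes "lin (zpow aX (i+1))" "lin (zpow aZ (-j-1))"
  shows "assocH i j aX aZ (tensor (tensor x y) z) = tensor (zpow aX (i+1) x) (tensor y (zpow aZ (-j-1) z))"
proof -
  have b1: "\<And>z. bilin (\<lambda>x y. tensor (zpow aX (i + 1) x) (tensor y (zpow aZ (- j - 1) z)))"
    by (rule bilinI, rule lin_comp[OF lin_tensor2 lin_tensor1],
        rule lin_comp[OF lin_tensor1 assms(1)])
  have b2: "bilin (\<lambda>xy z. tapp (\<lambda>x y. tensor (zpow aX (i + 1) x) (tensor y (zpow aZ (- j - 1) z))) xy)"
    by (rule bilinI, rule lin_tapp_fun, rule lin_comp[OF lin_tensor2 lin_comp[OF lin_tensor2 assms(2)]],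
        rule lin_tapp)
  show ?thesis unfolding assocH_def by (simp add: tapp_tensor[OF b2] tapp_tensor[OF b1])
qed

lemma assocH_inv_tt:
  assumes "lin (zpow aX (-i-1))" "lin (zpow aZ (j+1))"
  shows "assocH_inv i j aX aZ (tensor x (tensor y z)) = tensor (tensor (zpow aX (-i-1) x) y) (zpow aZ (j+1) z)"
proof -
  have b1: "\<And>x. bilin (\<lambda>y z. tensor (tensor (zpow aX (-i-1) x) y) (zpow aZ (j+1) z))"
    by (rule bilinI, rule lin_comp[OF lin_tensor2 assms(2)],
        rule lin_comp[OF lin_tensor1 lin_tensor2])
  have b2: "bilin (\<lambda>x yz. tapp (\<lambda>y z. tensor (tensor (zpow aX (-i-1) x) y) (zpow aZ (j+1) z)) yz)"
    by (rule bilinI, rule lin_tapp,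
        rule lin_tapp_fun, rule lin_comp[OF lin_tensor1 lin_comp[OF lin_tensor1 assms(1)]])
  show ?thesis unfolding assocH_inv_def by (simp add: tapp_tensor[OF b2] tapp_tensor[OF b1])
qed

lemma xi_beta_bilin:
  assumes "bilin act" "lin iV" "lin Z" "lin (\<lambda>x. act (iU u) x)"
  shows "bilin (\<lambda>v0 v1. tensor (act (iU u) (Z v1)) (iV v0))"
  by (rule bilinI, rule lin_comp[OF lin_tensor1 lin_comp[OF assms(4) assms(3)]],
      rule lin_comp[OF lin_tensor2 assms(2)])

lemma xi_tt:
  assumes "bilin actU" "lin (inv aU)" "lin rhoV"
  shows "xi aH m aU actU aV rhoV (tensor u v) =
     tapp (\<lambda>v0 v1. tensor (actU (inv aU u) (zpow aH m v1)) (inv aV v0)) (rhoV v)"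
proof -
  have la: "\<And>h. lin (\<lambda>x. actU x h)" using assms(1) by (simp add: bilin_def)
  have b: "bilin (\<lambda>u v. tapp (\<lambda>v0 v1. tensor (actU (inv aU u) (zpow aH m v1)) (inv aV v0)) (rhoV v))"
    by (rule bilinI, rule lin_comp[OF lin_tapp assms(3)],
        rule lin_tapp_fun, rule lin_comp[OF lin_tensor1 lin_comp[OF la assms(2)]])
  show ?thesis unfolding xi_def by (rule tapp_tensor[OF b])
qed



lemma dimod_D1:
  assumes "hom_long_dimodule mult one Delta eps aH aX act rho" "hom_bialgebra mult one Delta eps aH"
  shows "inv aX (act X (aH Y)) = act (inv aX X) Y"
proof -
  from assms(1) have b: "bij aX" and c: "\<And>u a. aX (act u a) = act (aX u) (aH a)"
    unfolding hom_long_dimodule_def by blast+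
  have "aX (act (inv aX X) Y) = act X (aH Y)" using c b by (simp add: bij_is_surj surj_f_inv_f)
  then show ?thesis using b by (metis bij_inv_eq_iff)
qed

lemma dimod_D2:
  assumes "hom_long_dimodule mult one Delta eps aH aX act rho" "hom_bialgebra mult one Delta eps aH"
  shows "rho (inv aX v) = tmap (inv aX) (inv aH) (rho v)"
proof -
  from assms(1) have b: "bij aX" "lin aX" and c: "\<And>u. rho (aX u) = tmap aX aH (rho u)"
    unfolding hom_long_dimodule_def by blast+
  from assms(2) have bH: "bij aH" "lin aH" unfolding hom_bialgebra_def by blast+
  have "rho v = tmap aX aH (rho (inv aX v))" using c[of "inv aX v"] b by (simp add: bij_is_surj surj_f_inv_f)
  then have "tmap (inv aX) (inv aH) (rho v) = tmap (\<lambda>x. inv aX (aX x)) (\<lambda>y. inv aH (aH y)) (rho (inv aX v))"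
    by (simp add: tmap_tmap lin_inv b bH)
  also have "\<dots> = rho (inv aX v)" using b bH by (simp add: bij_is_inj tmap_id_id)
  finally show ?thesis by simp
qed

theorem theorem6p4:
  fixes mult :: "('h::finite \<Rightarrow> 'k::field_char_0) \<Rightarrow> ('h \<Rightarrow> 'k) \<Rightarrow> ('h \<Rightarrow> 'k)"
    and one :: "'h \<Rightarrow> 'k"
    and Delta :: "('h \<Rightarrow> 'k) \<Rightarrow> ('h \<times> 'h \<Rightarrow> 'k)"
    and eps :: "('h \<Rightarrow> 'k) \<Rightarrow> 'k"
    and \<alpha>H :: "('h \<Rightarrow> 'k) \<Rightarrow> ('h \<Rightarrow> 'k)"
    and i j m :: int
    and \<alpha>U :: "('u::finite \<Rightarrow> 'k) \<Rightarrow> ('u \<Rightarrow> 'k)"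
    and actU :: "('u \<Rightarrow> 'k) \<Rightarrow> ('h \<Rightarrow> 'k) \<Rightarrow> ('u \<Rightarrow> 'k)"
    and rhoU :: "('u \<Rightarrow> 'k) \<Rightarrow> ('u \<times> 'h \<Rightarrow> 'k)"
    and \<alpha>V :: "('v::finite \<Rightarrow> 'k) \<Rightarrow> ('v \<Rightarrow> 'k)"
    and actV :: "('v \<Rightarrow> 'k) \<Rightarrow> ('h \<Rightarrow> 'k) \<Rightarrow> ('v \<Rightarrow> 'k)"
    and rhoV :: "('v \<Rightarrow> 'k) \<Rightarrow> ('v \<times> 'h \<Rightarrow> 'k)"
    and \<alpha>W :: "('w::finite \<Rightarrow> 'k) \<Rightarrow> ('w \<Rightarrow> 'k)"
    and actW :: "('w \<Rightarrow> 'k) \<Rightarrow> ('h \<Rightarrow> 'k) \<Rightarrow> ('w \<Rightarrow> 'k)"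
    and rhoW :: "('w \<Rightarrow> 'k) \<Rightarrow> ('w \<times> 'h \<Rightarrow> 'k)"
  assumes H: "hom_bialgebra mult one Delta eps \<alpha>H"
    and U: "hom_long_dimodule mult one Delta eps \<alpha>H \<alpha>U actU rhoU"
    and V: "hom_long_dimodule mult one Delta eps \<alpha>H \<alpha>V actV rhoV"
    and W: "hom_long_dimodule mult one Delta eps \<alpha>H \<alpha>W actW rhoW"
  shows "tmap (xi \<alpha>H m \<alpha>U actU \<alpha>V rhoV) id
           \<circ> assocH_inv i j \<alpha>U \<alpha>W
           \<circ> tmap id (xi \<alpha>H m \<alpha>V actV \<alpha>W rhoW)
           \<circ> assocH i j \<alpha>U \<alpha>W
       = assocH_inv i j \<alpha>U \<alpha>W
           \<circ> tmap id (xi \<alpha>H m \<alpha>V actV \<alpha>W rhoW)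
           \<circ> assocH i j \<alpha>U \<alpha>W
           \<circ> tmap (xi \<alpha>H m \<alpha>U actU \<alpha>V rhoV) id"
proof -
  let ?Z = "zpow \<alpha>H m"
  let ?xiUV = "xi \<alpha>H m \<alpha>U actU \<alpha>V rhoV"
  let ?xiVW = "xi \<alpha>H m \<alpha>V actV \<alpha>W rhoW"
  let ?K = "\<lambda>t. assocH_inv i j \<alpha>U \<alpha>W (tmap id ?xiVW (assocH i j \<alpha>U \<alpha>W t))"
  from H have lH: "lin \<alpha>H" and bH: "bij \<alpha>H" unfolding hom_bialgebra_def by blast+
  from U have lU: "lin \<alpha>U" and bU: "bij \<alpha>U" and actU: "bilin actU" and rU: "lin rhoU"
    unfolding hom_long_dimodule_def by blast+
  from V have lV: "lin \<alpha>V" and bV: "bij \<alpha>V" and actV: "bilin actV" and rV: "lin rhoV"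
    and longV: "\<And>u h. rhoV (actV u h) = tmap (\<lambda>x. actV x (\<alpha>H h)) \<alpha>H (rhoV u)"
    unfolding hom_long_dimodule_def by blast+
  from W have lW: "lin \<alpha>W" and bW: "bij \<alpha>W" and actW: "bilin actW" and rW: "lin rhoW"
    unfolding hom_long_dimodule_def by blast+
  have lZ: "lin ?Z" by (rule lin_zpow[OF lH bH])
  have liU: "lin (inv \<alpha>U)" and liV: "lin (inv \<alpha>V)" and liW: "lin (inv \<alpha>W)" and liH: "lin (inv \<alpha>H)"
    using lin_inv lU bU lV bV lW bW lH bH by blast+
  have lactU: "\<And>h. lin (\<lambda>x. actU x h)" "\<And>x. lin (actU x)" using actU by (auto simp: bilin_def)
  have lactV: "\<And>h. lin (\<lambda>x. actV x h)" "\<And>x. lin (actV x)" using actV by (auto simp: bilin_def)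
  have K_tt: "\<And>a b w. ?K (tensor (tensor a b) w) =
     tapp (\<lambda>w0 w1. tensor (tensor a (actV (inv \<alpha>V b) (?Z w1))) (zpow \<alpha>W (j+1) (inv \<alpha>W w0)))
       (rhoW (zpow \<alpha>W (-j-1) w))"
  proof -
    fix a b w
    let ?A = "zpow \<alpha>U (i+1) a"
    let ?s = "rhoW (zpow \<alpha>W (-j-1) w)"
    have "?K (tensor (tensor a b) w) = assocH_inv i j \<alpha>U \<alpha>W (tensor ?A
        (tapp (\<lambda>w0 w1. tensor (actV (inv \<alpha>V b) (?Z w1)) (inv \<alpha>W w0)) ?s))"
      by (simp add: assocH_tt lin_zpow lU bU lW bW tmap_tt lin_id lin_xi xi_tt actV liV rW)
    also have "\<dots> = tapp (\<lambda>w0 w1. assocH_inv i j \<alpha>U \<alpha>W (tensor ?A (tensor (actV (inv \<alpha>V b) (?Z w1)) (inv \<alpha>W w0)))) ?s"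
      by (rule tapp_push[OF lin_comp[OF lin_assocH_inv lin_tensor2]])
    also have "\<dots> = tapp (\<lambda>w0 w1. tensor (tensor a (actV (inv \<alpha>V b) (?Z w1))) (zpow \<alpha>W (j+1) (inv \<alpha>W w0))) ?s"
      by (simp add: assocH_inv_tt lin_zpow lU bU lW bW zpow_cancel)
    finally show "?K (tensor (tensor a b) w) =
     tapp (\<lambda>w0 w1. tensor (tensor a (actV (inv \<alpha>V b) (?Z w1))) (zpow \<alpha>W (j+1) (inv \<alpha>W w0))) ?s" .
  qed
  have inner: "\<And>u v w1 c. tmap ?xiUV id (tensor (tensor u (actV (inv \<alpha>V v) (?Z w1))) c) =
     tapp (\<lambda>v0 v1. tensor (tensor (actU (inv \<alpha>U u) (?Z v1)) (actV (inv \<alpha>V (inv \<alpha>V v0)) (?Z w1))) c) (rhoV v)"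
  proof -
    fix u v w1 c
    let ?g = "\<lambda>v0 v1. tensor (actU (inv \<alpha>U u) (?Z v1)) (inv \<alpha>V v0)"
    have bg: "bilin ?g"
      by (rule bilinI, rule lin_comp[OF lin_tensor1 lin_comp[OF lactU(2) lZ]],
          rule lin_comp[OF lin_tensor2 liV])
    have "tmap ?xiUV id (tensor (tensor u (actV (inv \<alpha>V v) (?Z w1))) c) =
      tensor (tapp ?g (rhoV (actV (inv \<alpha>V v) (?Z w1)))) c"
      by (simp add: tmap_tt lin_id lin_xi xi_tt actU liU rV)
    also have "rhoV (actV (inv \<alpha>V v) (?Z w1)) = tmap (\<lambda>x. actV (inv \<alpha>V x) (\<alpha>H (?Z w1))) (\<lambda>y. \<alpha>H (inv \<alpha>H y)) (rhoV v)"
      by (simp add: longV dimod_D2[OF V H] tmap_tmap lactV lH liV liH)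
    also have "tapp ?g \<dots> = tapp (\<lambda>v0 v1. tensor (actU (inv \<alpha>U u) (?Z v1)) (actV (inv \<alpha>V (inv \<alpha>V v0)) (?Z w1))) (rhoV v)"
      by (subst tapp_tmap[OF bg lin_comp[OF lactV(1) liV] lin_comp[OF lH liH]])
         (simp add: bij_is_surj[OF bH] surj_f_inv_f dimod_D1[OF V H])
    also have "tensor \<dots> c = tapp (\<lambda>v0 v1. tensor (tensor (actU (inv \<alpha>U u) (?Z v1)) (actV (inv \<alpha>V (inv \<alpha>V v0)) (?Z w1))) c) (rhoV v)"
      by (rule tapp_push[OF lin_tensor1])
    finally show "tmap ?xiUV id (tensor (tensor u (actV (inv \<alpha>V v) (?Z w1))) c) =
     tapp (\<lambda>v0 v1. tensor (tensor (actU (inv \<alpha>U u) (?Z v1)) (actV (inv \<alpha>V (inv \<alpha>V v0)) (?Z w1))) c) (rhoV v)" .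
  qed
  have linK: "lin ?K"
    by (rule lin_comp[OF lin_assocH_inv lin_comp[OF lin_tmap lin_assocH]])
  have main: "\<And>u v w. tmap ?xiUV id (?K (tensor (tensor u v) w)) = ?K (tmap ?xiUV id (tensor (tensor u v) w))"
  proof -
    fix u v w
    let ?s = "rhoW (zpow \<alpha>W (-j-1) w)"
    let ?G = "\<lambda>v0 v1 w0 w1. tensor (tensor (actU (inv \<alpha>U u) (?Z v1)) (actV (inv \<alpha>V (inv \<alpha>V v0)) (?Z w1))) (zpow \<alpha>W (j+1) (inv \<alpha>W w0))"
    have "tmap ?xiUV id (?K (tensor (tensor u v) w)) = tapp (\<lambda>w0 w1. tapp (\<lambda>v0 v1. ?G v0 v1 w0 w1) (rhoV v)) ?s"
      by (simp only: K_tt tapp_push[OF lin_tmap] inner)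
    also have "\<dots> = tapp (\<lambda>v0 v1. tapp (\<lambda>w0 w1. ?G v0 v1 w0 w1) ?s) (rhoV v)"
      by (rule tapp_swap)
    also have "\<dots> = tapp (\<lambda>v0 v1. ?K (tensor (tensor (actU (inv \<alpha>U u) (?Z v1)) (inv \<alpha>V v0)) w)) (rhoV v)"
      by (simp only: K_tt)
    also have "\<dots> = ?K (tapp (\<lambda>v0 v1. tensor (tensor (actU (inv \<alpha>U u) (?Z v1)) (inv \<alpha>V v0)) w) (rhoV v))"
      by (rule tapp_push[OF linK, symmetric])
    also have "\<dots> = ?K (tmap ?xiUV id (tensor (tensor u v) w))"
      by (simp add: tmap_tt lin_id lin_xi xi_tt actU liU rV tapp_push[OF lin_tensor1])
    finally show "tmap ?xiUV id (?K (tensor (tensor u v) w)) = ?K (tmap ?xiUV id (tensor (tensor u v) w))" .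
  qed
  have "(\<lambda>t. tmap ?xiUV id (?K t)) = (\<lambda>t. ?K (tmap ?xiUV id t))"
  proof (rule lin_ext)
    show "lin (\<lambda>t. tmap ?xiUV id (?K t))" by (rule lin_comp[OF lin_tmap linK])
    show "lin (\<lambda>t. ?K (tmap ?xiUV id t))" by (rule lin_comp[OF linK lin_tmap])
    fix x w
    have "(\<lambda>x. tmap ?xiUV id (?K (tensor x w))) = (\<lambda>x. ?K (tmap ?xiUV id (tensor x w)))"
    proof (rule lin_ext)
      show "lin (\<lambda>x. tmap ?xiUV id (?K (tensor x w)))"
        by (rule lin_comp[OF lin_comp[OF lin_tmap linK] lin_tensor1])
      show "lin (\<lambda>x. ?K (tmap ?xiUV id (tensor x w)))"
        by (rule lin_comp[OF lin_comp[OF linK lin_tmap] lin_tensor1])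
      fix u v show "tmap ?xiUV id (?K (tensor (tensor u v) w)) = ?K (tmap ?xiUV id (tensor (tensor u v) w))"
        by (rule main)
    qed
    then show "tmap ?xiUV id (?K (tensor x w)) = ?K (tmap ?xiUV id (tensor x w))" by (rule fun_cong)
  qed
  then show ?thesis by (simp add: fun_eq_iff)
qed


end
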